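(* For every integer $n\ge 0$, \[ \sum_{k=0}^{n}\Big(-\frac{1}{4}\Big)^k\binom{n}{k}\binom{2k}{k}H_{2k} =\frac{1}{2^{1+2n}}\binom{2n}{n}\{3H_n-4H_{2n}\}. \]
   Context: For an integer $m\ge 0$, $H_m$ denotes the $m$-th harmonic number: $H_0=0$ and $H_m=\sum_{j=1}^m \frac1j$ for $m\ge1$. $\binom{n}{k}$ is the usual binomial coefficient. *)

theory Defs
  imports "HOL-Analysis.Analysis"
begin

end

theory Submission
  imports Defs
begin

definition aa :: "nat \<Rightarrow> real" where
  "aa k = (-1/4::real)^k * real ((2*k) choose k)"

lemma central_rec: "(k+1) * ((2*k+2) choose (k+1)) = 2*(2*k+1) * ((2*k) choose k)"
proof -
  have "(2*k+2) choose (k+1) = (Suc (Suc (2*k))) choose (Suc k)" by simp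
  have 1: "Suc k * (Suc (Suc (2*k)) choose Suc k) = Suc (Suc (2*k)) * (Suc (2*k) choose k)"
    by (rule Suc_times_binomial)
  have 2: "Suc k * (Suc (2*k) choose k) = (Suc (2*k)) * ((2*k) choose k)"
  proof -
    have "Suc (2*k) * ((2*k) choose k) = (Suc (2*k) choose Suc k) * Suc k"
      by (rule Suc_times_binomial_eq)
    moreover have "Suc (2*k) choose Suc k = Suc (2*k) choose k"
      using binomial_symmetric[of "Suc k" "Suc (2*k)"] by simp
    ultimately show ?thesis by simp
  qed
  have ar: "\<And>X Y Z. Suc k * X = Suc (Suc (2*k)) * Y \<Longrightarrow> Suc k * Y = Suc (2*k) * Z
     \<Longrightarrow> Suc k * X = 2*(2*k+1)*Z"
  proof -
    fix X Y Z assume h1: "Suc k * X = Suc (Suc (2*k)) * Y" and h2: "Suc k * Y = Suc (2*k) * Z"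
    have "Suc k * (Suc k * X) = 2 * Suc k * (Suc k * Y)" using h1 by (simp add: algebra_simps)
    also have "\<dots> = Suc k * (2*(2*k+1)*Z)" using h2 by (simp add: algebra_simps)
    finally have "Suc k * (Suc k * X) = Suc k * (2*(2*k+1)*Z)" .
    then show "Suc k * X = 2*(2*k+1)*Z" by (metis mult_left_cancel Zero_not_Suc)
  qed
  have "Suc k * (Suc (Suc (2*k)) choose Suc k) = 2*(2*k+1) * ((2*k) choose k)"
    by (rule ar[OF 1 2])
  then show ?thesis by (simp add: numeral_2_eq_2 del: binomial_Suc_Suc)
qed

lemma aa_Suc: "aa (Suc k) = - aa k * (2*k+1) / (2*k+2)"
proof -
  have e: "real ((k+1) * ((2*k+2) choose (k+1))) = real (2*(2*k+1) * ((2*k) choose k))"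
    using central_rec[of k] by (simp only:)
  have "real (k+1) * real ((2*k+2) choose (k+1)) = 2*(2*k+1) * real ((2*k) choose k)"
    using e by (simp only: of_nat_mult)
  hence h: "real ((2*k+2) choose (k+1)) = 2*(2*k+1) * real ((2*k) choose k) / (k+1)"
    by (simp add: field_simps)
  have "aa (Suc k) = (-1/4::real)^(Suc k) * real ((2*k+2) choose (k+1))"
    unfolding aa_def by (simp add: mult_2_right)
  also have "\<dots> = - aa k * (2*k+1) / (2*k+2)"
    unfolding h aa_def by (simp add: field_simps)
  finally show ?thesis .
qed

lemma absorb: "(n - j) * (n choose j) = (j+1) * (n choose (j+1))"
proof (cases n)
  case 0 then show ?thesis by simp
next
  case (Suc m)
  have "(n - j) * (n choose j) = n * (m choose j)" using binomial_absorb_comp[of n j] Suc by simp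
  moreover have "Suc j * (Suc m choose Suc j) = Suc m * (m choose j)" by (rule Suc_times_binomial)
  ultimately show ?thesis using Suc by simp
qed

lemma key_nat: "(2*n+2) * (Suc n choose k) = (2*n+2*k+2) * (n choose k) + 2*k*(n choose (k-1))"
proof (cases k)
  case 0 then show ?thesis by simp
next
  case (Suc j)
  have a: "(n - j) * (n choose j) = (j+1) * (n choose (j+1))" by (rule absorb)
  have p: "Suc n choose Suc j = (n choose j) + (n choose Suc j)" by simp
  show ?thesis
  proof (cases "j \<le> n")
    case True
    then obtain m where m: "n = j + m" using le_Suc_ex by blast
    have a2: "m * (n choose j) = (j+1) * (n choose (j+1))" using a m by simp
    have "(2*n+2) * (Suc n choose Suc j) = (2*n+2) * (n choose j) + (2*n+2) * (n choose Suc j)"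
      using p by (simp add: algebra_simps del: binomial_Suc_Suc)
    also have "\<dots> = 2*(m * (n choose j)) + (2*j+2) * (n choose j) + (2*n+2) * (n choose Suc j)"
      using m by (simp add: algebra_simps del: binomial_Suc_Suc)
    also have "\<dots> = (2*n+2*Suc j+2) * (n choose Suc j) + 2*Suc j*(n choose j)"
      using a2 by (simp add: algebra_simps del: binomial_Suc_Suc)
    finally show ?thesis using Suc by simp
  next
    case False
    then show ?thesis using Suc by (simp add: binomial_eq_0)
  qed
qed

definition tt :: "nat \<Rightarrow> nat \<Rightarrow> real" where
  "tt n k = real (n choose k) * aa k"

definition gg :: "nat \<Rightarrow> nat \<Rightarrow> real" where
  "gg n k = (case k of 0 \<Rightarrow> 0 | Suc j \<Rightarrow> (2*j+1) * real (n choose j) * aa j)"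

lemma aa0[simp]: "aa 0 = 1" by (simp add: aa_def)

lemma point: "(2*real n+2) * tt (Suc n) k - (2*real n+1) * tt n k = gg n (Suc k) - gg n k"
proof (cases k)
  case 0 then show ?thesis by (simp add: tt_def gg_def)
next
  case (Suc j)
  have aj: "(2*real j+1) * aa j = -(2*real j+2) * aa (Suc j)"
    unfolding aa_Suc by (simp add: field_simps)
  have kn: "real ((2*n+2) * (Suc n choose k)) = real ((2*n+2*k+2) * (n choose k) + 2*k*(n choose (k-1)))"
    using key_nat[of n k] by (simp only:)
  hence kr: "(2*real n+2) * real (Suc n choose Suc j) = (2*n+2*Suc j+2) * real (n choose Suc j) + 2*Suc j*real (n choose j)"
    using Suc by (simp only: of_nat_mult of_nat_add) simp
  have e1: "gg n (Suc k) = (2*real (Suc j)+1) * real (n choose Suc j) * aa (Suc j)"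
    unfolding gg_def Suc by simp
  have e2: "gg n k = -(2*real j+2) * real (n choose j) * aa (Suc j)"
    unfolding gg_def Suc using arg_cong[OF aj, of "\<lambda>x. x * real (n choose j)"] by (simp add: algebra_simps)
  show ?thesis unfolding e1 e2 unfolding tt_def Suc
    using arg_cong[OF kr, of "\<lambda>x. x * aa (Suc j)"] by (simp add: algebra_simps)
qed

lemma sum_rel:
  "(2*real n+2) * (\<Sum>k\<le>Suc n. tt (Suc n) k * f k) - (2*real n+1) * (\<Sum>k\<le>Suc n. tt n k * f k)
   = (\<Sum>k\<le>n. gg n (Suc k) * (f k - f (Suc k)))"
proof -
  have "(2*real n+2) * (\<Sum>k\<le>Suc n. tt (Suc n) k * f k) - (2*real n+1) * (\<Sum>k\<le>Suc n. tt n k * f k)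
     = (\<Sum>k\<le>Suc n. ((2*real n+2) * tt (Suc n) k - (2*real n+1) * tt n k) * f k)"
    by (simp add: sum_distrib_left sum_subtractf algebra_simps)
  also have "\<dots> = (\<Sum>k\<le>Suc n. (gg n (Suc k) - gg n k) * f k)"
    by (simp only: point)
  also have "\<dots> = (\<Sum>k\<le>Suc n. gg n (Suc k) * f k) - (\<Sum>k\<le>Suc n. gg n k * f k)"
    by (simp only: left_diff_distrib sum_subtractf)
  also have "(\<Sum>k\<le>Suc n. gg n (Suc k) * f k) = (\<Sum>k\<le>n. gg n (Suc k) * f k)"
    by (simp add: gg_def)
  also have "(\<Sum>k\<le>Suc n. gg n k * f k) = (\<Sum>k\<le>n. gg n (Suc k) * f (Suc k))"
    by (subst sum.atMost_Suc_shift) (simp add: gg_def)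
  finally show ?thesis by (simp add: sum_subtractf algebra_simps)
qed

definition TT :: "nat \<Rightarrow> real" where "TT n = (\<Sum>k\<le>n. tt n k)"

lemma tt_over: "tt n (Suc n) = 0" by (simp add: tt_def)

lemma TT_Suc: "TT (Suc n) = (2*real n+1) / (2*real n+2) * TT n"
proof -
  have "(2*real n+2) * (\<Sum>k\<le>Suc n. tt (Suc n) k * 1) - (2*real n+1) * (\<Sum>k\<le>Suc n. tt n k * 1) = 0"
    using sum_rel[of n "\<lambda>k. 1"] by simp
  hence "(2*real n+2) * TT (Suc n) = (2*real n+1) * TT n" by (simp add: TT_def tt_over)
  thus ?thesis by (simp add: field_simps)
qed

definition cc :: "nat \<Rightarrow> real" where "cc n = (-1)^n * aa n"

lemma TT_cc: "TT n = cc n"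
proof (induction n)
  case 0 then show ?case by (simp add: TT_def cc_def tt_def)
next
  case (Suc n)
  show ?case unfolding TT_Suc Suc cc_def aa_Suc by (simp add: field_simps)
qed

lemma shift_sum: "(\<Sum>k\<le>n. real (n choose k) * aa (Suc k)) = TT (Suc n) - TT n"
proof -
  have "TT (Suc n) = 1 + (\<Sum>k\<le>n. real (n choose k) * aa (Suc k)) + (\<Sum>k\<le>n. tt n (Suc k))"
    unfolding TT_def by (subst sum.atMost_Suc_shift) (simp add: tt_def sum.distrib algebra_simps)
  moreover have "TT n = 1 + (\<Sum>k\<le>n. tt n (Suc k))"
  proof -
    have "TT n = (\<Sum>k\<le>Suc n. tt n k)" unfolding TT_def by (simp add: tt_over)
    also have "\<dots> = 1 + (\<Sum>k\<le>n. tt n (Suc k))" by (subst sum.atMost_Suc_shift) (simp add: tt_def)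
    finally show ?thesis .
  qed
  ultimately show ?thesis by simp
qed

definition SS :: "nat \<Rightarrow> real" where "SS n = (\<Sum>k\<le>n. tt n k * harm (2*k))"

lemma harm2: "harm (2 * Suc k) = harm (2*k) + 1/(2*k+1) + 1/(2*k+2)"
proof -
  have "2 * Suc k = Suc (Suc (2*k))" by simp
  thus ?thesis by (simp add: harm_Suc inverse_eq_divide add_ac)
qed

lemma lin3: "(p::real) \<noteq> 0 \<Longrightarrow> q \<noteq> 0 \<Longrightarrow> p * C * A * (-(1/p + 1/q)) = - C * A - C * A * p / q"
  by (simp add: field_simps)

lemma lin2: "- (C::real) * A - C * A * x / y = C * (- A * x / y) - C * A"
  by (simp add: algebra_simps)

lemma SS_rec: "(2*real n+2) * SS (Suc n) - (2*real n+1) * SS n = TT (Suc n) - 2 * TT n"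
proof -
  have s1: "SS (Suc n) = (\<Sum>k\<le>Suc n. tt (Suc n) k * harm (2*k))" by (simp only: SS_def)
  have s2: "SS n = (\<Sum>k\<le>Suc n. tt n k * harm (2*k))" by (simp add: SS_def tt_over)
  have "(2*real n+2) * SS (Suc n) - (2*real n+1) * SS n
     = (\<Sum>k\<le>n. gg n (Suc k) * (harm (2*k) - harm (2 * Suc k)))"
    using sum_rel[of n "\<lambda>k. harm (2*k)"] s1 s2 by (simp only:)
  also have "\<dots> = (\<Sum>k\<le>n. real (n choose k) * aa (Suc k) - tt n k)"
  proof (rule sum.cong[OF refl])
    fix k
    have nz: "2*real k+1 \<noteq> 0" "2*real k+2 \<noteq> 0" by (simp_all add: add_nonneg_eq_0_iff)
    have hd: "harm (2*k) - harm (2 * Suc k) = -(1/(2*real k+1) + 1/(2*real k+2))"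
      unfolding harm2 by (simp add: add.commute)
    have g: "gg n (Suc k) = (2*real k+1) * real (n choose k) * aa k" by (simp add: gg_def)
    have a: "aa (Suc k) = - aa k * (2*real k+1) / (2*real k+2)" by (subst aa_Suc) (simp only: of_nat_add of_nat_mult of_nat_numeral of_nat_1)
    have "gg n (Suc k) * (harm (2*k) - harm (2 * Suc k))
       = - real (n choose k) * aa k - real (n choose k) * aa k * (2*real k+1) / (2*real k+2)"
      unfolding hd g using nz by (rule lin3)
    also have "\<dots> = real (n choose k) * aa (Suc k) - tt n k"
      unfolding a tt_def by (rule lin2)
    finally show "gg n (Suc k) * (harm (2*k) - harm (2 * Suc k)) = real (n choose k) * aa (Suc k) - tt n k" .
  qed
  also have "\<dots> = TT (Suc n) - 2 * TT n"
    by (simp add: sum_subtractf shift_sum) (simp add: TT_def)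
  finally show ?thesis .
qed

lemma lin: "(x::real) * c / 2 * (3*h + a - 4*H - b - d) = x * (c/2*(3*h - 4*H)) + c * (x*(a - b - d)/2)"
  by (simp add: field_simps)

lemma SS_closed: "SS n = cc n / 2 * (3 * harm n - 4 * harm (2*n))"
proof (induction n)
  case 0 then show ?case by (simp add: SS_def harm_def)
next
  case (Suc n)
  have r: "(2*real n+2) * SS (Suc n) = (2*real n+1) * SS n + cc (Suc n) - 2 * cc n"
    using SS_rec[of n] by (simp add: TT_cc)
  have c: "cc (Suc n) = (2*real n+1) / (2*real n+2) * cc n" using TT_Suc[of n] by (simp add: TT_cc)
  have nz: "2*real n+1 \<noteq> 0" "2*real n+2 \<noteq> 0" "real n + 1 \<noteq> 0"
    "1 + 2*real n \<noteq> 0" "2 + 2*real n \<noteq> 0" "1 + real n \<noteq> 0" "2 + real n * 6 + real n * (real n * 4) \<noteq> 0"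
     by (simp_all add: add_nonneg_eq_0_iff add_pos_nonneg)
  have h1: "harm (Suc n) = harm n + 1/(real n+1)" by (simp add: harm_Suc inverse_eq_divide)
  define R where "R m = cc m / 2 * (3 * harm m - 4 * harm (2*m))" for m
  have rr: "(2*real n+2) * R (Suc n) = (2*real n+1) * R n + cc (Suc n) - 2 * cc n"
  proof -
    have "(2*real n+2) * R (Suc n) = (2*real n+2) * cc (Suc n) / 2 * (3 * harm (Suc n) - 4 * harm (2 * Suc n))"
      by (simp add: R_def)
    also have "\<dots> = ((2*real n+2) * cc (Suc n)) / 2 * (3 * harm n + 3/(real n+1) - 4 * harm (2*n) - 4/(2*real n+1) - 4/(2*real n+2))"
      unfolding h1 harm2 by (simp add: algebra_simps)
    also have "(2*real n+2) * cc (Suc n) = (2*real n+1) * cc n" unfolding c using nz by simp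
    also have "(2*real n+1) * cc n / 2 * (3 * harm n + 3/(real n+1) - 4 * harm (2*n) - 4/(2*real n+1) - 4/(2*real n+2))
       = (2*real n+1) * R n + cc n * ((2*real n+1) * (3/(real n+1) - 4/(2*real n+1) - 4/(2*real n+2)) / 2)"
      unfolding R_def by (rule lin)
    also have "3/(real n+1) - 4/(2*real n+1) - 4/(2*real n+2) = 1/(real n+1) - 4/(2*real n+1)"
    proof -
      have "4/(2*real n+2) = 2/(real n+1)" using nz by (simp add: field_simps)
      thus ?thesis by simp
    qed
    also have "(2*real n+1) * (1/(real n+1) - 4/(2*real n+1)) / 2 = (2*real n+1)/(2*real n+2) - 2"
      using nz by (simp add: field_simps)
    finally show ?thesis unfolding c by (simp add: algebra_simps)
  qed
  have "(2*real n+2) * SS (Suc n) = (2*real n+2) * R (Suc n)" using r rr Suc by (simp add: R_def)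
  then show ?case using nz by (simp add: R_def)
qed

theorem theorem7:
  fixes n :: nat
  shows "(\<Sum>k=0..n. (-1/4::real)^k * real (n choose k) * real ((2*k) choose k) * harm (2*k))
         = 1 / 2^(1+2*n) * real ((2*n) choose n) * (3 * harm n - 4 * harm (2*n))"
proof -
  have "(\<Sum>k=0..n. (-1/4::real)^k * real (n choose k) * real ((2*k) choose k) * harm (2*k)) = SS n"
    unfolding SS_def tt_def aa_def atLeast0AtMost by (simp add: algebra_simps)
  also have "\<dots> = cc n / 2 * (3 * harm n - 4 * harm (2*n))" by (rule SS_closed)
  also have "cc n / 2 = 1 / 2^(1+2*n) * real ((2*n) choose n)"
  proof -
    have "(-1::real)^n * (-1/4)^n = (1/4)^n" by (simp add: power_mult_distrib[symmetric])
    moreover have "(2::real)^(1+2*n) = 2 * 4^n" by (simp add: power_add power_mult)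
    ultimately show ?thesis unfolding cc_def aa_def
      by (simp add: field_simps power_divide)
  qed
  finally show ?thesis .
qed

end
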